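(* Fix $i\in\mathcal V$. Let $\mathbf u\in\mathcal A(b):=\{\mathbf w\in\mathbb R^{d+2}:0<\rho(\mathbf w)<b^{-1}\}$ and $\mathbf p\in\mathbb R^{d+2}$, and let $\ell_0>0$ be such that $\mathbf u+\ell_0\mathbf p\in\mathcal A(b)$. Define $f:[0,\ell_0]\to\mathbb R$ by $f(\ell)=\Phi_i^s(\mathbf u+\ell\mathbf p)$, where $$\Phi_i^s(\mathbf w)=\rho(\mathbf w)E(\mathbf w)-\tfrac12\|\mathbf m(\mathbf w)\|^2-S_i^{\min,n}\rho(\mathbf w)^{\gamma_i^{\min,n}+1}(1-b\rho(\mathbf w))^{1-\gamma_i^{\min,n}}.$$ Then the sign of $f'''(\ell)$ is constant over $[0,\ell_0]$ (i.e. $f''$ is monotone on $[0,\ell_0]$).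
   Context: Let $d\ge1$, $b\ge0$ (when $b=0$, read $b^{-1}=+\infty$). For $\mathbf w\in\mathbb R^{d+2}$, $\rho(\mathbf w)$ is its first component, $\mathbf m(\mathbf w)\in\mathbb R^d$ its components $2$ to $d+1$, $E(\mathbf w)$ its last component; for $\rho>0$, $e(\mathbf w)=E/\rho-\tfrac12\|\mathbf m/\rho\|^2$. Admissible set $\mathcal B(b)=\{\rho>0,\ 1-b\rho>0,\ e>0\}$. A pressure oracle $p:\mathcal B(b)\to[0,\infty)$ is given, with flux $\mathbb f(\mathbf w)=(\mathbf m,\ \frac{\mathbf m}{\rho}\otimes\mathbf m+p\,\mathbb I_d,\ \frac{\mathbf m}{\rho}(E+p))^{\mathsf T}$. Discretization: finite index set $\mathcal V$, stencils $\mathcal I(i)\ni i$, masses $m_i>0$, vectors $\mathbf c_{ij}\in\mathbb R^d$ ($\mathbf c_{ij}=-\mathbf c_{ji}$, $\sum_j\mathbf c_{ij}=0$, nonzero for $j\ne i$), $\mathbf n_{ij}=\mathbf c_{ij}/\|\mathbf c_{ij}\|$, states $\mathsf U_k^n=(\varrho_k^n,\mathsf M_k^n,\mathsf E_k^n)\in\mathcal B(b)$ for all $k$. $\gamma_k^n=1+\frac{p(\mathsf U_k^n)(1-b\varrho_k^n)}{\varrho_k^n e(\mathsf U_k^n)}$ and $\gamma_i^{\min,n}=\min_{j\in\mathcal I(i)}\gamma_j^n$ (so $\gamma_i^{\min,n}\ge1$). For $j\ne i$, $d_{ij}^{\mathrm L,n}=\max(\widehat\lambda(\mathbf n_{ij},\mathsf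 U_i^n,\mathsf U_j^n)\|\mathbf c_{ij}\|,\widehat\lambda(\mathbf n_{ji},\mathsf U_j^n,\mathsf U_i^n)\|\mathbf c_{ji}\|)$, where $\widehat\lambda$ is a positive upper bound on the maximum wave speed of the associated one-dimensional extended Riemann problem (any positive numbers are admissible for the present statement), and $\overline{\mathsf U}_{ij}^n=\tfrac12(\mathsf U_i^n+\mathsf U_j^n)-\frac{1}{2d_{ij}^{\mathrm L,n}}(\mathbb f(\mathsf U_j^n)-\mathbb f(\mathsf U_i^n))\mathbf c_{ij}$. With $S(\mathbf w,\gamma)=\frac{\rho e(\mathbf w)}{\rho^\gamma}(1-b\rho)^{\gamma-1}$, set $S_i^{\min,n}=\min\big(\min_{j\in\mathcal I(i)}S(\mathsf U_j^n,\gamma_i^{\min,n}),\min_{j\in\mathcal I(i)\setminus\{i\}}S(\overline{\mathsf U}_{ij}^n,\gamma_i^{\min,n})\big)$, which is a nonnegative constant in the setting of the paper (the auxiliary states lie in $\mathcal B(b)$). $\Phi_i^s(\mathbf w)=\rho(\mathbf w)\Psi_i^s(\mathbf w)$ where $\Psi_i^s(\mathbf w)=\rho e(\mathbf w)-S_i^{\min,n}\rho^{\gamma_i^{\min,n}}(1-b\rho)^{1-\gamma_i^{\min,n}}$. *)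

theory Defs
  imports "HOL-Analysis.Analysis"
begin

text \<open>States w in R^(d+2) are represented as triples (rho, m, E) with m in R^d,
  d = CARD('d).\<close>

type_synonym ('d) state = "real \<times> (real^('d::finite)) \<times> real"

definition rho :: "('d::finite) state \<Rightarrow> real" where "rho w = fst w"
definition mom :: "('d::finite) state \<Rightarrow> real^('d::finite)" where "mom w = fst (snd w)"
definition En :: "('d::finite) state \<Rightarrow> real" where "En w = snd (snd w)"

definition eint :: "('d::finite) state \<Rightarrow> real" where
  "eint w = En w / rho w - 1/2 * (norm ((1 / rho w) *\<^sub>R mom w))\<^sup>2"

definition admissible :: "real \<Rightarrow> ('d::finite) state \<Rightarrow> bool" where
  "admissible b w \<longleftrightarrow> rho w > 0 \<and> 1 - b * rho w > 0 \<and> eint w > 0"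

text \<open>A(b) = {w. 0 < rho w < 1/b} (no upper bound when b = 0).\<close>
definition A_set :: "real \<Rightarrow> ('d::finite) state set" where
  "A_set b = {w. 0 < rho w \<and> b * rho w < 1}"

text \<open>Flux f(w) applied to a vector c in R^d (f(w) c).\<close>
definition flux :: "( ('d::finite) state \<Rightarrow> real) \<Rightarrow> ('d::finite) state \<Rightarrow> real^('d::finite) \<Rightarrow> ('d::finite) state" where
  "flux p w c = (mom w \<bullet> c,
      ((mom w \<bullet> c) / rho w) *\<^sub>R mom w + p w *\<^sub>R c,
      ((mom w \<bullet> c) / rho w) * (En w + p w))"

definition gam :: "( ('d::finite) state \<Rightarrow> real) \<Rightarrow> real \<Rightarrow> ('d::finite) state \<Rightarrow> real" where
  "gam p b w = 1 + p w * (1 - b * rho w) / (rho w * eint w)"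

definition gamma_min ::
  "( ('d::finite) state \<Rightarrow> real) \<Rightarrow> real \<Rightarrow> ('v \<Rightarrow> 'v set) \<Rightarrow> ('v \<Rightarrow> ('d::finite) state) \<Rightarrow> 'v \<Rightarrow> real" where
  "gamma_min p b I U i = Min ((\<lambda>j. gam p b (U j)) ` I i)"

definition nvec :: "real^('d::finite) \<Rightarrow> real^('d::finite)" where
  "nvec c = (1 / norm c) *\<^sub>R c"

definition dL ::
  "(real^('d::finite) \<Rightarrow> ('d::finite) state \<Rightarrow> ('d::finite) state \<Rightarrow> real) \<Rightarrow> ('v \<Rightarrow> 'v \<Rightarrow> real^('d::finite))
    \<Rightarrow> ('v \<Rightarrow> ('d::finite) state) \<Rightarrow> 'v \<Rightarrow> 'v \<Rightarrow> real" where
  "dL lam c U i j = max (lam (nvec (c i j)) (U i) (U j) * norm (c i j))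
                        (lam (nvec (c j i)) (U j) (U i) * norm (c j i))"

definition Ubar ::
  "( ('d::finite) state \<Rightarrow> real) \<Rightarrow> (real^('d::finite) \<Rightarrow> ('d::finite) state \<Rightarrow> ('d::finite) state \<Rightarrow> real) \<Rightarrow> ('v \<Rightarrow> 'v \<Rightarrow> real^('d::finite))
    \<Rightarrow> ('v \<Rightarrow> ('d::finite) state) \<Rightarrow> 'v \<Rightarrow> 'v \<Rightarrow> ('d::finite) state" where
  "Ubar p lam c U i j = (1/2) *\<^sub>R (U i + U j)
     - (1 / (2 * dL lam c U i j)) *\<^sub>R (flux p (U j) (c i j) - flux p (U i) (c i j))"

definition Sfun :: "real \<Rightarrow> ('d::finite) state \<Rightarrow> real \<Rightarrow> real" where
  "Sfun b w g = rho w * eint w / (rho w powr g) * (1 - b * rho w) powr (g - 1)"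

definition S_min ::
  "( ('d::finite) state \<Rightarrow> real) \<Rightarrow> (real^('d::finite) \<Rightarrow> ('d::finite) state \<Rightarrow> ('d::finite) state \<Rightarrow> real) \<Rightarrow> real
    \<Rightarrow> ('v \<Rightarrow> 'v set) \<Rightarrow> ('v \<Rightarrow> 'v \<Rightarrow> real^('d::finite)) \<Rightarrow> ('v \<Rightarrow> ('d::finite) state) \<Rightarrow> 'v \<Rightarrow> real" where
  "S_min p lam b I c U i =
     min (Min ((\<lambda>j. Sfun b (U j) (gamma_min p b I U i)) ` I i))
         (Min ((\<lambda>j. Sfun b (Ubar p lam c U i j) (gamma_min p b I U i)) ` (I i - {i})))"

definition Phi_s :: "real \<Rightarrow> real \<Rightarrow> real \<Rightarrow> ('d::finite) state \<Rightarrow> real" where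
  "Phi_s b S g w = rho w * En w - 1/2 * (norm (mom w))\<^sup>2
      - S * rho w powr (g + 1) * (1 - b * rho w) powr (1 - g)"

end

theory Submission
  imports Defs
begin

lemma XY_deriv:
  fixes g b r :: real
  assumes r: "r > 0" and q: "1 - b*r > 0" and R: "DERIV R r :> R'"
  shows "DERIV (\<lambda>x. x powr g * (1-b*x) powr (-g) * R x) r :>
     r powr g * (1-b*r) powr (-g) * (g*R r/r + g*b*R r/(1-b*r) + R')"
proof -
  have d1: "DERIV (\<lambda>x. x powr g) r :> r powr g * (0 * ln r + 1 * g / r)"
    using DERIV_powr[OF DERIV_ident _ DERIV_const, of r g] r by simp
  have d2: "DERIV (\<lambda>x. (1-b*x) powr (-g)) r :> (1-b*r) powr (-g) * (0 * ln (1-b*r) + (-b) * (-g) / (1-b*r))"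
    proof -
    have "DERIV (\<lambda>x. 1-b*x) r :> -b" by (auto intro!: derivative_eq_intros)
    from DERIV_powr[OF this _ DERIV_const, of "-g"] q show ?thesis by simp
  qed
  have "DERIV (\<lambda>x. x powr g * (1-b*x) powr (-g) * R x) r :>
     (r powr g * (1-b*r) powr (-g)) * R' + (r powr g * ((1-b*r) powr (-g) * (0 * ln (1-b*r) + (-b) * (-g) / (1-b*r)))
       + (r powr g * (0 * ln r + 1 * g / r)) * (1-b*r) powr (-g)) * R r"
    by (intro DERIV_mult' d1 d2 R)
  moreover have "(r powr g * (1-b*r) powr (-g)) * R' + (r powr g * ((1-b*r) powr (-g) * (0 * ln (1-b*r) + (-b) * (-g) / (1-b*r)))
       + (r powr g * (0 * ln r + 1 * g / r)) * (1-b*r) powr (-g)) * R r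
     = r powr g * (1-b*r) powr (-g) * (g*R r/r + g*b*R r/(1-b*r) + R')"
    by (simp add: algebra_simps)
  ultimately show ?thesis by simp
qed

lemma deriv_eqI: "DERIV f x :> D \<Longrightarrow> D = E \<Longrightarrow> DERIV f x :> E" by simp

definition "F0 b g r = r powr g * (1-b*r) powr (-g) * (r*(1-b*r))"
definition "F1 b g r = r powr g * (1-b*r) powr (-g) * (g+1-2*b*r)"
definition "F2 b g r = r powr g * (1-b*r) powr (-g) * ((g*(g+1) - 2*b*r*(g+1) + 2*b^2*r^2)/(r*(1-b*r)))"
definition "F3 b g r = r powr g * (1-b*r) powr (-g) * ((g+1)*g*(g-1)/(r^2*(1-b*r)^2))"

lemma F0_d: fixes r b g :: real assumes r: "r > 0" and q: "1 - b*r > 0"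
  shows "DERIV (F0 b g) r :> F1 b g r"
proof -
  have dR: "DERIV (\<lambda>x. x*(1-b*x)) r :> 1*(1-b*r) + r*(-b)"
    by (auto intro!: derivative_eq_intros)
  show ?thesis
    unfolding F0_def[abs_def]
    apply (rule deriv_eqI[OF XY_deriv[OF r q dR]])
    unfolding F1_def using r q
    by (simp add: field_simps)
qed

lemma F1_d: fixes r b g :: real assumes r: "r > 0" and q: "1 - b*r > 0"
  shows "DERIV (F1 b g) r :> F2 b g r"
proof -
  have dR: "DERIV (\<lambda>x. g+1-2*b*x) r :> -2*b"
    by (auto intro!: derivative_eq_intros)
  show ?thesis
    unfolding F1_def[abs_def]
    apply (rule deriv_eqI[OF XY_deriv[OF r q dR]])
    unfolding F2_def using r q
    by (simp add: field_simps) (simp add: algebra_simps power2_eq_square)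
qed

lemma rat_id:
  fixes r q b g :: real
  assumes r: "r \<noteq> 0" and q: "q \<noteq> 0" and qd: "q = 1 - b*r"
  shows "g*((g*(g+1) - 2*b*r*(g+1) + 2*b^2*r^2)/(r*q))/r + g*b*((g*(g+1) - 2*b*r*(g+1) + 2*b^2*r^2)/(r*q))/q
     + ((-2*b*(g+1) + 4*b^2*r) * (r*q) - (g*(g+1) - 2*b*r*(g+1) + 2*b^2*r^2)*(1-2*b*r)) / (r*q)^2
     = (g+1)*g*(g-1)/(r^2*q^2)"
proof -
  have "g*(g*(g+1) - 2*b*r*(g+1) + 2*b^2*r^2)*q + g*b*(g*(g+1) - 2*b*r*(g+1) + 2*b^2*r^2)*r
     + ((-2*b*(g+1) + 4*b^2*r) * (r*q) - (g*(g+1) - 2*b*r*(g+1) + 2*b^2*r^2)*(1-2*b*r))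
     = (g+1)*g*(g-1)" unfolding qd by algebra
  show ?thesis using r q apply (simp add: field_simps power2_eq_square)
    using qd by algebra
qed

lemma F2_d: fixes r b g :: real assumes r: "r > 0" and q: "1 - b*r > 0"
  shows "DERIV (F2 b g) r :> F3 b g r"
proof -
  have dR: "DERIV (\<lambda>x. (g*(g+1) - 2*b*x*(g+1) + 2*b^2*x^2)/(x*(1-b*x))) r :>
    ((-2*b*(g+1) + 4*b^2*r) * (r*(1-b*r)) - (g*(g+1) - 2*b*r*(g+1) + 2*b^2*r^2)*(1-2*b*r)) / (r*(1-b*r))^2"
    using r q by (auto intro!: derivative_eq_intros simp: algebra_simps power2_eq_square)
  show ?thesis
    unfolding F2_def[abs_def]
    apply (rule deriv_eqI[OF XY_deriv[OF r q dR]])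
    unfolding F3_def
    apply (rule arg_cong[where f="\<lambda>t. r powr g * (1-b*r) powr (-g) * t"])
    using rat_id[of r "1-b*r" b g] r q by simp
qed


lemma G_eq:
  fixes r b g :: real
  assumes r: "r > 0" and q: "1 - b*r > 0"
  shows "r powr (g+1) * (1-b*r) powr (1-g) = F0 b g r"
proof -
  have h1: "r powr (g+1) = r powr g * r" using r by (simp add: powr_add)
  have h2: "(1-b*r) powr (1-g) = (1-b*r) * (1-b*r) powr (-g)" using q
    using powr_add[of "1-b*r" 1 "-g"] q by simp
  show ?thesis unfolding F0_def h1 h2 by (simp only: ac_simps)
qed

lemma lin_chain:
  fixes R0 P l :: real
  assumes "DERIV F (R0 + l*P) :> D"
  shows "DERIV (\<lambda>l. F (R0 + l*P)) l :> D * P"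
proof -
  have "DERIV (\<lambda>l. R0 + l*P) l :> P" by (auto intro!: derivative_eq_intros)
  from DERIV_chain2[OF assms this] show ?thesis .
qed

lemma deriv3:
  fixes f f1 f2 f3 :: "real \<Rightarrow> real"
  assumes T: "open T" and x: "x \<in> T"
    and d1: "\<And>y. y \<in> T \<Longrightarrow> DERIV f y :> f1 y"
    and d2: "\<And>y. y \<in> T \<Longrightarrow> DERIV f1 y :> f2 y"
    and d3: "\<And>y. y \<in> T \<Longrightarrow> DERIV f2 y :> f3 y"
  shows "(deriv ^^ 3) f x = f3 x"
proof -
  have e1: "deriv f y = f1 y" if "y \<in> T" for y using d1[OF that] by (rule DERIV_imp_deriv)
  have e2: "deriv (deriv f) y = f2 y" if y: "y \<in> T" for y
  proof -
    have "eventually (\<lambda>z. z \<in> T) (nhds y)" using T y by (rule eventually_nhds_in_open)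
    then have "eventually (\<lambda>z. deriv f z = f1 z) (nhds y)" by eventually_elim (use e1 in auto)
    then have "deriv (deriv f) y = deriv f1 y" by (rule deriv_cong_ev) simp
    also have "\<dots> = f2 y" using d2[OF y] by (rule DERIV_imp_deriv)
    finally show ?thesis .
  qed
  have "eventually (\<lambda>z. z \<in> T) (nhds x)" using T x by (rule eventually_nhds_in_open)
  then have "eventually (\<lambda>z. deriv (deriv f) z = f2 z) (nhds x)" by eventually_elim (use e2 in auto)
  then have "deriv (deriv (deriv f)) x = deriv f2 x" by (rule deriv_cong_ev) simp
  also have "\<dots> = f3 x" using d3[OF x] by (rule DERIV_imp_deriv)
  finally show ?thesis by (simp add: numeral_3_eq_3)
qed

theorem lemma4p6:
  fixes V :: "'v set" and I :: "'v \<Rightarrow> 'v set" and ms :: "'v \<Rightarrow> real"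
    and c :: "'v \<Rightarrow> 'v \<Rightarrow> real^'d" and U :: "'v \<Rightarrow> 'd state"
    and p :: "'d state \<Rightarrow> real" and lam :: "real^'d \<Rightarrow> 'd state \<Rightarrow> 'd state \<Rightarrow> real"
    and b :: real and i :: 'v and u pv :: "'d state" and l0 :: real
  assumes b: "b \<ge> 0"
    and V: "finite V"
    and I: "\<And>k. k \<in> V \<Longrightarrow> I k \<subseteq> V \<and> k \<in> I k"
    and masses: "\<And>k. k \<in> V \<Longrightarrow> ms k > 0"
    and c_anti: "\<And>k j. k \<in> V \<Longrightarrow> j \<in> I k \<Longrightarrow> c k j = - c j k"
    and c_sum: "\<And>k. k \<in> V \<Longrightarrow> (\<Sum>j\<in>I k. c k j) = 0"
    and c_nz: "\<And>k j. k \<in> V \<Longrightarrow> j \<in> I k \<Longrightarrow> j \<noteq> k \<Longrightarrow> c k j \<noteq> 0"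
    and p_nonneg: "\<And>w. admissible b w \<Longrightarrow> p w \<ge> 0"
    and lam_pos: "\<And>n w1 w2. lam n w1 w2 > 0"
    and U_adm: "\<And>k. k \<in> V \<Longrightarrow> admissible b (U k)"
    and Ubar_adm: "\<And>j. j \<in> I i \<Longrightarrow> j \<noteq> i \<Longrightarrow> admissible b (Ubar p lam c U i j)"
    and i: "i \<in> V"
    and u: "u \<in> A_set b"
    and l0: "l0 > 0"
    and ul0: "u + l0 *\<^sub>R pv \<in> A_set b"
  shows "let f = (\<lambda>l. Phi_s b (S_min p lam b I c U i) (gamma_min p b I U i) (u + l *\<^sub>R pv))
         in (\<forall>l\<in>{0..l0}. (deriv ^^ 3) f l \<ge> 0) \<or> (\<forall>l\<in>{0..l0}. (deriv ^^ 3) f l \<le> 0)"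
proof -
  define S where "S = S_min p lam b I c U i"
  define g where "g = gamma_min p b I U i"
  define f where "f = (\<lambda>l. Phi_s b S g (u + l *\<^sub>R pv))"
  define R0 where "R0 = rho u"
  define P where "P = rho pv"
  define E0 where "E0 = En u"
  define EP where "EP = En pv"
  define N0 where "N0 = (norm (mom u))^2"
  define M where "M = mom u \<bullet> mom pv"
  define N1 where "N1 = (norm (mom pv))^2"
  define T where "T = {l. 0 < R0 + l*P \<and> b*(R0 + l*P) < 1}"
  define Fq where "Fq = (\<lambda>l. (R0+l*P)*(E0+l*EP) - 1/2*(N0 + 2*l*M + l^2*N1) - S*F0 b g (R0+l*P))"
  define f1 where "f1 = (\<lambda>l. (P*(E0+l*EP) + (R0+l*P)*EP - 1/2*(2*M + 2*l*N1)) - S*(F1 b g (R0+l*P)*P))"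
  define f2 where "f2 = (\<lambda>l. (2*P*EP - N1) - S*(F2 b g (R0+l*P)*P*P))"
  define f3 where "f3 = (\<lambda>l. (0::real) - S*(F3 b g (R0+l*P)*P*P*P))"
  have Topen: "open T" unfolding T_def
    by (intro open_Collect_conj open_Collect_less continuous_intros)
  have comp: "rho (u + l *\<^sub>R pv) = R0 + l*P" "En (u + l *\<^sub>R pv) = E0 + l*EP"
    "mom (u + l *\<^sub>R pv) = mom u + l *\<^sub>R mom pv" for l
    by (simp_all add: rho_def En_def mom_def R0_def P_def E0_def EP_def)
  have nrm: "(norm (mom u + l *\<^sub>R mom pv))^2 = N0 + 2*l*M + l^2*N1" for l
    unfolding N0_def M_def N1_def
    by (simp only: power2_norm_eq_inner) (simp add: inner_add_left inner_add_right inner_commute algebra_simps power2_eq_square)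
  have fF: "f l = Fq l" if "l \<in> T" for l
  proof -
    have r: "R0 + l*P > 0" and q: "1 - b*(R0+l*P) > 0" using that by (auto simp: T_def)
    show ?thesis unfolding f_def Fq_def Phi_s_def comp nrm
      using G_eq[OF r q, of g, symmetric] by (simp add: mult.assoc)
  qed
  have D1: "DERIV Fq l :> f1 l" if "l \<in> T" for l
  proof -
    have r: "R0 + l*P > 0" and q: "1 - b*(R0+l*P) > 0" using that by (auto simp: T_def)
    have pd: "DERIV (\<lambda>l. (R0+l*P)*(E0+l*EP) - 1/2*(N0 + 2*l*M + l^2*N1)) l :>
       (P*(E0+l*EP) + (R0+l*P)*EP - 1/2*(2*M + 2*l*N1))"
      by (auto intro!: derivative_eq_intros simp: algebra_simps)
    show ?thesis unfolding Fq_def f1_def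
      by (rule DERIV_diff[OF pd DERIV_cmult[OF lin_chain[OF F0_d[OF r q]]]])
  qed
  have D2: "DERIV f1 l :> f2 l" if "l \<in> T" for l
  proof -
    have r: "R0 + l*P > 0" and q: "1 - b*(R0+l*P) > 0" using that by (auto simp: T_def)
    have pd: "DERIV (\<lambda>l. P*(E0+l*EP) + (R0+l*P)*EP - 1/2*(2*M + 2*l*N1)) l :> (2*P*EP - N1)"
      by (auto intro!: derivative_eq_intros simp: algebra_simps)
    have cd: "DERIV (\<lambda>l. F1 b g (R0+l*P)*P) l :> F2 b g (R0+l*P)*P*P"
      using DERIV_cmult[OF lin_chain[OF F1_d[OF r q]], of P] by (simp add: algebra_simps)
    show ?thesis unfolding f1_def f2_def
      by (rule DERIV_diff[OF pd DERIV_cmult[OF cd]])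
  qed
  have D3: "DERIV f2 l :> f3 l" if "l \<in> T" for l
  proof -
    have r: "R0 + l*P > 0" and q: "1 - b*(R0+l*P) > 0" using that by (auto simp: T_def)
    have pd: "DERIV (\<lambda>l. 2*P*EP - N1) l :> 0"
      by (auto intro!: derivative_eq_intros)
    have cd: "DERIV (\<lambda>l. F2 b g (R0+l*P)*P*P) l :> F3 b g (R0+l*P)*P*P*P"
      using DERIV_cmult[OF lin_chain[OF F2_d[OF r q]], of "P*P"] by (simp add: algebra_simps)
    show ?thesis unfolding f2_def f3_def
      by (rule DERIV_diff[OF pd DERIV_cmult[OF cd]])
  qed
  have Df: "DERIV f l :> f1 l" if "l \<in> T" for l
    by (rule has_field_derivative_transform_within_open[OF D1[OF that] Topen that])
       (simp add: fF)
  have d3f: "(deriv ^^ 3) f l = f3 l" if "l \<in> T" for l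
    by (rule deriv3[OF Topen that Df D2 D3])
  have sub: "l \<in> T" if l: "l \<in> {0..l0}" for l
  proof -
    have a1: "0 < R0" "b*R0 < 1" using u by (auto simp: A_set_def R0_def)
    have a2: "0 < R0 + l0*P" "b*(R0 + l0*P) < 1" using ul0 comp(1)[of l0] by (auto simp: A_set_def)
    have l': "0 \<le> l" "l \<le> l0" using l by auto
    show ?thesis
    proof (cases "P \<ge> 0")
      case True
      have "0 \<le> l*P" using l' True by simp
      moreover have "l*P \<le> l0*P" using l' True by (simp add: mult_right_mono)
      then have "b*(R0 + l*P) \<le> b*(R0 + l0*P)" using b by (simp add: mult_left_mono)
      ultimately show ?thesis using a1 a2 by (simp add: T_def)
    next
      case False
      have "l*P \<le> 0" using l' False by (simp add: mult_nonneg_nonpos)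
      then have "b*(R0 + l*P) \<le> b*R0" using b by (simp add: mult_left_mono)
      moreover have "l0*P \<le> l*P" using l' False by (simp add: mult_right_mono_neg)
      ultimately show ?thesis using a1 a2 by (simp add: T_def)
    qed
  qed
  define K where "K = - S*((g+1)*g*(g-1))*(P*P*P)"
  have f3K: "f3 l = K * ((R0+l*P) powr g * (1-b*(R0+l*P)) powr (-g) / ((R0+l*P)^2*(1-b*(R0+l*P))^2))" for l
  proof -
    have "\<And>Z c D. 0 - S*(Z*(c/D)*P*P*P) = (- S*c*(P*P*P)) * (Z/D)"
      by (simp add: times_divide_eq_right times_divide_eq_left mult_ac)
    then show ?thesis unfolding f3_def K_def F3_def by simp
  qed
  have Zpos: "0 \<le> (R0+l*P) powr g * (1-b*(R0+l*P)) powr (-g) / ((R0+l*P)^2*(1-b*(R0+l*P))^2)" for l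
    by simp
  show ?thesis
    unfolding Let_def S_def[symmetric] g_def[symmetric] f_def[symmetric]
  proof (cases "K \<ge> 0")
    case True
    then show "(\<forall>l\<in>{0..l0}. (deriv ^^ 3) f l \<ge> 0) \<or> (\<forall>l\<in>{0..l0}. (deriv ^^ 3) f l \<le> 0)"
      using d3f sub f3K Zpos by (simp add: zero_le_mult_iff)
  next
    case False
    then show "(\<forall>l\<in>{0..l0}. (deriv ^^ 3) f l \<ge> 0) \<or> (\<forall>l\<in>{0..l0}. (deriv ^^ 3) f l \<le> 0)"
    proof (intro disjI2 ballI)
      fix l assume "l \<in> {0..l0}"
      then have "(deriv ^^ 3) f l = f3 l" using d3f sub by blast
      then show "(deriv ^^ 3) f l \<le> 0" unfolding f3K
        using mult_nonpos_nonneg[OF _ Zpos[of l], of K] False by simp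
    qed
  qed
qed

end
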